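(* Let $s\in\mathbb{N}$, let $M$ be a quadratic form on $\mathbb{F}_{p}^{d}$, and let $x_{1},x_{2}\in\Gamma^{s}(M)$ and $y\in\Gamma^{s}_{1}(M)$. If $x_{1}\sim y$ and $x_{2}\sim y$, then $x_{1}\sim x_{2}$. In particular, $\sim$ is an equivalence relation on $\Gamma^{s}_{1}(M)$.
   Context: $\mathrm{HP}_{d}(s)$: homogeneous degree-$s$ polynomials in $\mathbb{F}_{p}[x_{1},\dots,x_{d}]$ plus $0$. $M(n)=(nA)\cdot n+n\cdot u+v$ with $A$ symmetric. For a subspace $V$, $J^{M}_{V}$ is the ideal of $\mathbb{F}_{p}[x_{1},\dots,x_{d}]$ generated by $n\mapsto(nA)\cdot n$ and $n\mapsto(hA)\cdot n$, $h\in V$. $\Gamma^{s}(M)$ is the set of pairs $(h,J^{M}_{V}+f)$ with $V$ a subspace of $\mathbb{F}_{p}^{d}$, $h\in V$, $f\in\mathrm{HP}_{d}(s)$; $\Gamma^{s}_{1}(M)$ is the subset of elements of the form $(h,J^{M}_{\mathrm{span}\{h\}}+f)$. $(h,I+f)\sim(h',I'+f')$ iff $h=h'$ and $f-f'\in I+I'$. *)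

theory Defs
  imports "HOL-Analysis.Analysis" "HOL-Library.Poly_Mapping"
begin

text \<open>Polynomials in the variables x_i (i :: 'n) over the field 'a, as finitely
supported maps from monomials (exponent vectors) to coefficients.\<close>
type_synonym ('a, 'n) mpoly = "('n \<Rightarrow>\<^sub>0 nat) \<Rightarrow>\<^sub>0 'a"

definition Var :: "'n \<Rightarrow> ('a::comm_ring_1, 'n) mpoly" where
  "Var i = Poly_Mapping.single (Poly_Mapping.single i 1) 1"

definition Const :: "'a::comm_ring_1 \<Rightarrow> ('a, 'n) mpoly" where
  "Const c = Poly_Mapping.single 0 c"

definition mon_deg :: "('n \<Rightarrow>\<^sub>0 nat) \<Rightarrow> nat" where
  "mon_deg m = sum (Poly_Mapping.lookup m) (Poly_Mapping.keys m)"

definition HP :: "nat \<Rightarrow> ('a::comm_ring_1, 'n) mpoly set" where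
  "HP s = {f. \<forall>m \<in> Poly_Mapping.keys f. mon_deg m = s}"

definition ideal_gen :: "('a::comm_ring_1, 'n) mpoly set \<Rightarrow> ('a, 'n) mpoly set" where
  "ideal_gen G = {(\<Sum>g\<in>F. c g * g) | F c. finite F \<and> F \<subseteq> G}"

text \<open>A quadratic form M(n) = (nA).n + n.u + v is given by the triple (A, u, v).\<close>
type_synonym ('a, 'n) qform = "('a^'n^'n) \<times> ('a^'n) \<times> 'a"

definition quad_form :: "('a::field, 'n::finite) qform \<Rightarrow> bool" where
  "quad_form M = (transpose (fst M) = fst M)"

definition qmat :: "('a, 'n) qform \<Rightarrow> 'a^'n^'n" where
  "qmat M = fst M"

definition quad_poly :: "'a::field^'n^'n \<Rightarrow> ('a, 'n::finite) mpoly" where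
  "quad_poly A = (\<Sum>i\<in>UNIV. \<Sum>j\<in>UNIV. Const (A$i$j) * Var i * Var j)"

definition lin_poly :: "'a::field^'n^'n \<Rightarrow> 'a^'n \<Rightarrow> ('a, 'n::finite) mpoly" where
  "lin_poly A h = (\<Sum>j\<in>UNIV. Const ((h v* A)$j) * Var j)"

definition J :: "('a::field, 'n::finite) qform \<Rightarrow> ('a^'n) set \<Rightarrow> ('a, 'n) mpoly set" where
  "J M V = ideal_gen ({quad_poly (qmat M)} \<union> lin_poly (qmat M) ` V)"

text \<open>An element (h, J_V + f) of Gamma^s(M) is represented by the triple (h, V, f).\<close>
type_synonym ('a, 'n) gelem = "('a^'n) \<times> ('a^'n) set \<times> ('a, 'n) mpoly"

definition Gamma :: "nat \<Rightarrow> ('a::field, 'n::finite) qform \<Rightarrow> ('a, 'n) gelem set" where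
  "Gamma s M = {(h, V, f). vec.subspace V \<and> h \<in> V \<and> f \<in> HP s}"

definition Gamma1 :: "nat \<Rightarrow> ('a::field, 'n::finite) qform \<Rightarrow> ('a, 'n) gelem set" where
  "Gamma1 s M = {(h, V, f) \<in> Gamma s M. V = vec.span {h}}"

definition sim :: "('a::field, 'n::finite) qform \<Rightarrow> ('a, 'n) gelem \<Rightarrow> ('a, 'n) gelem \<Rightarrow> bool" where
  "sim M x y = (case x of (h, V, f) \<Rightarrow> case y of (h', V', f') \<Rightarrow>
      h = h' \<and> (\<exists>a\<in>J M V. \<exists>b\<in>J M V'. f - f' = a + b))"

end

theory Submission
  imports Defs
begin

lemma ig_zero: "0 \<in> ideal_gen G"
  unfolding ideal_gen_def by (rule CollectI, rule exI[of _ "{}"], auto)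

lemma ig_uminus: assumes "a \<in> ideal_gen G" shows "- a \<in> ideal_gen G"
proof -
  obtain F c where "finite F" "F \<subseteq> G" "a = (\<Sum>g\<in>F. c g * g)"
    using assms unfolding ideal_gen_def by blast
  then have "- a = (\<Sum>g\<in>F. (\<lambda>g. - c g) g * g)"
    by (simp add: sum_negf[symmetric])
  then show ?thesis using \<open>finite F\<close> \<open>F \<subseteq> G\<close> unfolding ideal_gen_def
    by (intro CollectI exI[of _ F] exI[of _ "\<lambda>g. - c g"]) auto
qed

lemma ig_add: assumes "a \<in> ideal_gen G" "b \<in> ideal_gen G" shows "a + b \<in> ideal_gen G"
proof -
  obtain F1 c1 where 1: "finite F1" "F1 \<subseteq> G" "a = (\<Sum>g\<in>F1. c1 g * g)"
    using assms(1) unfolding ideal_gen_def by blast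
  obtain F2 c2 where 2: "finite F2" "F2 \<subseteq> G" "b = (\<Sum>g\<in>F2. c2 g * g)"
    using assms(2) unfolding ideal_gen_def by blast
  define c where "c g = (if g \<in> F1 then c1 g else 0) + (if g \<in> F2 then c2 g else 0)" for g
  have e1: "(\<Sum>g\<in>F1 \<union> F2. (if g \<in> F1 then c1 g else 0) * g) = a"
    using 1 2 by (simp add: sum.mono_neutral_cong_right[of "F1 \<union> F2" F1] if_distrib)
  have e2: "(\<Sum>g\<in>F1 \<union> F2. (if g \<in> F2 then c2 g else 0) * g) = b"
    using 1 2 by (simp add: sum.mono_neutral_cong_right[of "F1 \<union> F2" F2] if_distrib)
  have "a + b = (\<Sum>g\<in>F1 \<union> F2. c g * g)"
    unfolding c_def distrib_right sum.distrib e1 e2 ..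
  then show ?thesis using 1 2 unfolding ideal_gen_def by blast
qed

lemma ig_mono: "G \<subseteq> H \<Longrightarrow> ideal_gen G \<subseteq> ideal_gen H"
  unfolding ideal_gen_def by blast

lemma J_span: assumes "vec.subspace V" "h \<in> V" shows "J M (vec.span {h}) \<subseteq> J M V"
proof -
  have "vec.span {h} \<subseteq> V" using assms by (simp add: vec.span_minimal)
  then show ?thesis unfolding J_def by (intro ig_mono) blast
qed

lemma J_zero: "0 \<in> J M V" unfolding J_def by (rule ig_zero)
lemma J_uminus: "a \<in> J M V \<Longrightarrow> - a \<in> J M V" unfolding J_def by (rule ig_uminus)
lemma J_add: "a \<in> J M V \<Longrightarrow> b \<in> J M V \<Longrightarrow> a + b \<in> J M V" unfolding J_def by (rule ig_add)

lemma part1: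
  assumes "x1 \<in> Gamma s M" "x2 \<in> Gamma s M" "y \<in> Gamma1 s M" "sim M x1 y" "sim M x2 y"
  shows "sim M x1 x2"
proof -
  obtain h1 V1 f1 where x1: "x1 = (h1, V1, f1)" by (cases x1) auto
  obtain h2 V2 f2 where x2: "x2 = (h2, V2, f2)" by (cases x2) auto
  obtain h V g where y: "y = (h, V, g)" by (cases y) auto
  have V: "V = vec.span {h}" using assms(3) y unfolding Gamma1_def by auto
  have g1: "vec.subspace V1" "h1 \<in> V1" "vec.subspace V2" "h2 \<in> V2"
    using assms(1,2) x1 x2 unfolding Gamma_def by auto
  obtain a1 b1 where s1: "h1 = h" "a1 \<in> J M V1" "b1 \<in> J M V" "f1 - g = a1 + b1"
    using assms(4) x1 y unfolding sim_def by auto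
  obtain a2 b2 where s2: "h2 = h" "a2 \<in> J M V2" "b2 \<in> J M V" "f2 - g = a2 + b2"
    using assms(5) x2 y unfolding sim_def by auto
  have b1: "b1 \<in> J M V1" using J_span[of V1 h M] g1 s1 V by auto
  have b2: "b2 \<in> J M V2" using J_span[of V2 h M] g1 s2 V by auto
  have "f1 - f2 = (a1 + b1) + - (a2 + b2)" using s1(4) s2(4) by (simp add: algebra_simps)
  moreover have "a1 + b1 \<in> J M V1" using J_add s1(2) b1 by blast
  moreover have "- (a2 + b2) \<in> J M V2" using J_add J_uminus s2(2) b2 by blast
  ultimately show ?thesis using x1 x2 s1 s2 unfolding sim_def by auto
qed

lemma sim_refl: "sim M x x"
  unfolding sim_def by (cases x) (auto intro!: bexI[OF _ J_zero])

lemma sim_sym: "sim M x y \<Longrightarrow> sim M y x"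
proof -
  assume a: "sim M x y"
  obtain h V f where x: "x = (h, V, f)" by (cases x) auto
  obtain h' V' f' where y: "y = (h', V', f')" by (cases y) auto
  obtain a b where "h = h'" "a \<in> J M V" "b \<in> J M V'" "f - f' = a + b"
    using a x y unfolding sim_def by auto
  moreover have e: "f' - f = - b + - a" using \<open>f - f' = a + b\<close>
    by (metis add.commute minus_add minus_diff_eq)
  ultimately have "h' = h \<and> (\<exists>a'\<in>J M V'. \<exists>b'\<in>J M V. f' - f = a' + b')"
    using J_uminus[of b M V'] J_uminus[of a M V] by blast
  then show ?thesis using x y unfolding sim_def by simp
qed

theorem lemma2p5:
  fixes M :: "('a::{field,finite}, 'n::finite) qform" and s :: nat
  assumes "prime CARD('a)"
    and "quad_form M"
  shows "(\<forall>x1 x2 y. x1 \<in> Gamma s M \<and> x2 \<in> Gamma s M \<and> y \<in> Gamma1 s M \<and>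
            sim M x1 y \<and> sim M x2 y \<longrightarrow> sim M x1 x2)
         \<and> equiv (Gamma1 s M) {(x, y). x \<in> Gamma1 s M \<and> y \<in> Gamma1 s M \<and> sim M x y}"
proof -
  have G: "Gamma1 s M \<subseteq> Gamma s M" unfolding Gamma1_def by auto
  show ?thesis
  proof (intro conjI allI impI)
    show "sim M x1 x2" if "x1 \<in> Gamma s M \<and> x2 \<in> Gamma s M \<and> y \<in> Gamma1 s M \<and>
            sim M x1 y \<and> sim M x2 y" for x1 x2 y using part1 that by blast
  next
    show "equiv (Gamma1 s M) {(x, y). x \<in> Gamma1 s M \<and> y \<in> Gamma1 s M \<and> sim M x y}"
    proof (rule equivI)
      show "refl_on (Gamma1 s M) {(x, y). x \<in> Gamma1 s M \<and> y \<in> Gamma1 s M \<and> sim M x y}"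
        by (auto simp: refl_on_def sim_refl)
      show "{(x, y). x \<in> Gamma1 s M \<and> y \<in> Gamma1 s M \<and> sim M x y} \<subseteq> Gamma1 s M \<times> Gamma1 s M"
        by auto
      show "sym {(x, y). x \<in> Gamma1 s M \<and> y \<in> Gamma1 s M \<and> sim M x y}"
        by (auto simp: sym_def intro: sim_sym)
      show "trans {(x, y). x \<in> Gamma1 s M \<and> y \<in> Gamma1 s M \<and> sim M x y}"
        using G by (auto simp: trans_def intro: part1 sim_sym)
    qed
  qed
qed

end
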